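(* Let $A=I_0+\dots+I_n$ be a sum of C$^*$-ideals, $J\subseteq\{0,\dots,n\}$ and $p\in\mathbb N$. Let $f\in B_J$ satisfy $f|_{\Delta^n_L}=0$ for every $L\subseteq\{0,\dots,n\}$ with $|L|=p+1$. Then $f$ is a finite sum $f=\sum_L f_L$ with $f_L\in B_L$, where each occurring $L$ satisfies $L\subseteq J$ and $|L|\le p$.
   Context: $\Delta^n=\{x\in[0,1]^{n+1}:\sum_ix_i=1\}$, $\partial\Delta^n$ = points with a zero coordinate, $\Delta^n_j=\{x\in\Delta^n:x_j\le x_i\ \forall i\}$, $\Delta^n_L=\bigcap_{j\in L}\Delta^n_j$ for nonempty $L$. $B=\{f:\Delta^n\to A\text{ continuous}: f|_{\partial\Delta^n}=0,\ f(\Delta^n_j)\subseteq I_j\ \forall j\}$ and $B_L=\{f\in B:f(\Delta^n_{j'})=0\ \forall j'\notin L\}$ (so $B_\emptyset=0$). *)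

theory Defs
  imports "HOL-Analysis.Analysis"
begin

definition cstar_algebra :: "(complex \<Rightarrow> 'a::{banach,real_normed_algebra} \<Rightarrow> 'a) \<Rightarrow> ('a \<Rightarrow> 'a) \<Rightarrow> bool" where
  "cstar_algebra cmul star \<longleftrightarrow>
     (\<forall>r x. cmul (complex_of_real r) x = scaleR r x) \<and>
     (\<forall>c x y. cmul c (x + y) = cmul c x + cmul c y) \<and>
     (\<forall>c d x. cmul (c + d) x = cmul c x + cmul d x) \<and>
     (\<forall>c d x. cmul c (cmul d x) = cmul (c * d) x) \<and>
     (\<forall>c x. norm (cmul c x) = cmod c * norm x) \<and>
     (\<forall>c x y. cmul c (x * y) = cmul c x * y \<and> cmul c (x * y) = x * cmul c y) \<and>
     (\<forall>x. star (star x) = x) \<and>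
     (\<forall>x y. star (x + y) = star x + star y) \<and>
     (\<forall>c x. star (cmul c x) = cmul (cnj c) (star x)) \<and>
     (\<forall>x y. star (x * y) = star y * star x) \<and>
     (\<forall>x. norm (star x * x) = (norm x)\<^sup>2)"

definition cstar_ideal :: "(complex \<Rightarrow> 'a::{banach,real_normed_algebra} \<Rightarrow> 'a) \<Rightarrow> 'a set \<Rightarrow> bool" where
  "cstar_ideal cmul I \<longleftrightarrow> closed I \<and> 0 \<in> I \<and>
     (\<forall>x\<in>I. \<forall>y\<in>I. x + y \<in> I) \<and> (\<forall>c. \<forall>x\<in>I. cmul c x \<in> I) \<and>
     (\<forall>a. \<forall>x\<in>I. a * x \<in> I \<and> x * a \<in> I)"

text \<open>Standard std_simplex, indexed by a finite type 'n (so n+1 = CARD('n)).\<close>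
definition std_simplex :: "(real^'n::finite) set" where
  "std_simplex = {x. (\<forall>i. 0 \<le> x$i \<and> x$i \<le> 1) \<and> (\<Sum>i\<in>UNIV. x$i) = 1}"

definition simplex_boundary :: "(real^'n::finite) set" where
  "simplex_boundary = {x\<in>std_simplex. \<exists>i. x$i = 0}"

definition simplex_part :: "'n::finite \<Rightarrow> (real^'n) set" where
  "simplex_part j = {x\<in>std_simplex. \<forall>i. x$j \<le> x$i}"

definition simplex_parts :: "'n::finite set \<Rightarrow> (real^'n) set" where
  "simplex_parts L = (\<Inter>j\<in>L. simplex_part j)"

definition Bset :: "('n::finite \<Rightarrow> 'a::{banach,real_normed_algebra} set) \<Rightarrow> (real^'n \<Rightarrow> 'a) set" where
  "Bset I = {f. continuous_on std_simplex f \<and> (\<forall>x\<in>simplex_boundary. f x = 0) \<and>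
                (\<forall>j. f ` simplex_part j \<subseteq> I j)}"

definition BsetL :: "('n::finite \<Rightarrow> 'a::{banach,real_normed_algebra} set) \<Rightarrow> 'n set \<Rightarrow> (real^'n \<Rightarrow> 'a) set" where
  "BsetL I L = {f\<in>Bset I. \<forall>j'. j' \<notin> L \<longrightarrow> (\<forall>x\<in>simplex_part j'. f x = 0)}"

end

theory Submission
  imports Defs
begin

lemma closed_simplex_part: "closed (simplex_part j)"
  unfolding simplex_part_def std_simplex_def
  by (auto intro!: closed_Collect_conj closed_Collect_all closed_Collect_le closed_Collect_eq continuous_intros)

theorem lemma4p4p5:
  fixes cmul :: "complex \<Rightarrow> 'a::{banach,real_normed_algebra} \<Rightarrow> 'a"
    and star :: "'a \<Rightarrow> 'a"
    and I :: "'n::finite \<Rightarrow> 'a set"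
    and J :: "'n set" and p :: nat and f :: "real^'n \<Rightarrow> 'a"
  assumes "cstar_algebra cmul star"
    and "\<forall>j. cstar_ideal cmul (I j)"
    and "\<forall>a. \<exists>x. (\<forall>j. x j \<in> I j) \<and> a = (\<Sum>j\<in>UNIV. x j)"
    and "f \<in> BsetL I J"
    and "\<forall>L. card L = p + 1 \<longrightarrow> (\<forall>x\<in>simplex_parts L. f x = 0)"
  shows "\<exists>g. (\<forall>L. L \<subseteq> J \<and> card L \<le> p \<longrightarrow> g L \<in> BsetL I L) \<and>
             (\<forall>x\<in>std_simplex. f x = (\<Sum>L\<in>{L. L \<subseteq> J \<and> card L \<le> p}. g L x))"
proof -
  define C where "C L = (\<Union>j\<in>-L. simplex_part j)" for L :: "'n set"
  define \<psi> where "\<psi> L x = (if C L = {} then 1 else infdist x (C L))" for L x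
  define LL where "LL = {L. L \<subseteq> J \<and> card L \<le> p}"
  define S where "S x = (\<Sum>L\<in>LL. \<psi> L x)" for x
  define g where "g L x = (\<psi> L x / S x) *\<^sub>R f x" for L x
  have finLL: "finite LL" by simp
  have closedC: "closed (C L)" for L
    unfolding C_def by (intro closed_UN) (auto simp: closed_simplex_part)
  have psi_nn: "\<psi> L x \<ge> 0" for L x by (simp add: \<psi>_def infdist_nonneg)
  have contpsi: "continuous_on UNIV (\<psi> L)" for L
    by (cases "C L = {}") (auto simp: \<psi>_def intro!: continuous_intros continuous_on_infdist)
  have contS: "continuous_on UNIV S"
    unfolding S_def by (intro continuous_intros contpsi)
  have S_nn: "S x \<ge> 0" for x unfolding S_def by (intro sum_nonneg psi_nn)
  have psi_le: "\<psi> L x \<le> S x" if "L \<in> LL" for L x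
    unfolding S_def using that finLL psi_nn by (intro member_le_sum) auto
  have fB: "f \<in> Bset I" and fJ: "\<forall>j'. j' \<notin> J \<longrightarrow> (\<forall>x\<in>simplex_part j'. f x = 0)"
    using assms(4) by (auto simp: BsetL_def)
  have fc: "continuous_on std_simplex f" and fbd: "\<forall>x\<in>simplex_boundary. f x = 0"
    and fI: "\<forall>j. f ` simplex_part j \<subseteq> I j"
    using fB by (auto simp: Bset_def)
  have key: "S x > 0" if x: "x \<in> std_simplex" and fx: "f x \<noteq> 0" for x
  proof -
    define L where "L = {i. \<forall>k. x$i \<le> x$k}"
    have partL: "x \<in> simplex_part j \<longleftrightarrow> j \<in> L" for j
      using x by (auto simp: simplex_part_def L_def)
    have LJ: "L \<subseteq> J"
    proof
      fix j assume "j \<in> L"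
      then show "j \<in> J" using fJ fx partL by blast
    qed
    have Lp: "card L \<le> p"
    proof (rule ccontr)
      assume "\<not> card L \<le> p"
      then obtain L' where "L' \<subseteq> L" "card L' = p + 1"
        by (metis finite obtain_subset_with_card_n not_less_eq_eq Suc_eq_plus1)
      then have "x \<in> simplex_parts L'"
        using partL by (auto simp: simplex_parts_def)
      then show False using assms(5) \<open>card L' = p+1\<close> fx by blast
    qed
    have LLL: "L \<in> LL" using LJ Lp by (simp add: LL_def)
    have "x \<notin> C L" using partL by (auto simp: C_def)
    then have "\<psi> L x > 0"
      using closedC by (auto simp: \<psi>_def intro!: infdist_pos_not_in_closed)
    then show ?thesis using psi_le[OF LLL, of x] by linarith
  qed
  have f0: "f x = 0" if "x \<in> std_simplex" "S x = 0" for x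
    using key that by force
  have gcont: "continuous_on std_simplex (g L)" if "L \<in> LL" for L
  proof (clarsimp simp: continuous_on_eq_continuous_within)
    fix x :: "real^'n" assume x: "x \<in> std_simplex"
    have fcx: "continuous (at x within std_simplex) f"
      using fc x continuous_on_eq_continuous_within by blast
    show "continuous (at x within std_simplex) (g L)"
    proof (cases "S x = 0")
      case False
      have "continuous (at x within std_simplex) (\<lambda>y. \<psi> L y / S y)"
      proof -
        have c1: "continuous (at x within std_simplex) (\<psi> L)"
          using contpsi[of L] by (simp add: continuous_on_eq_continuous_at continuous_at_imp_continuous_within)
        have c2: "continuous (at x within std_simplex) S"
          using contS by (simp add: continuous_on_eq_continuous_at continuous_at_imp_continuous_within)
        show ?thesis using c1 c2 False unfolding continuous_within by (rule tendsto_divide)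
      qed
      then show ?thesis unfolding g_def by (rule continuous_scaleR[OF _ fcx])
    next
      case True
      have fx: "f x = 0" using f0 x True by blast
      have gx: "g L x = 0" by (simp add: g_def fx)
      have ft: "(f \<longlongrightarrow> 0) (at x within std_simplex)"
        using fcx fx by (simp add: continuous_within)
      have bd: "norm (g L y) \<le> norm (f y) * 1" for y
      proof -
        have "\<bar>\<psi> L y / S y\<bar> \<le> 1"
        proof (cases "S y = 0")
          case True then show ?thesis by simp
        next
          case False
          then have Sp: "S y > 0" using S_nn[of y] by linarith
          have "\<psi> L y / S y \<le> 1" using psi_le[OF that, of y] Sp by (simp add: divide_le_eq)
          moreover have "\<psi> L y / S y \<ge> 0" using psi_nn[of L y] Sp by simp
          ultimately show ?thesis by linarith
        qed
        then show ?thesis unfolding g_def norm_scaleR real_norm_def mult_1_right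
          by (rule mult_left_le_one_le[OF norm_ge_zero abs_ge_zero])
      qed
      have "eventually (\<lambda>y. norm (g L y) \<le> norm (f y) * 1) (at x within std_simplex)"
        using bd by (intro always_eventually allI)
      then have "((g L) \<longlongrightarrow> 0) (at x within std_simplex)"
        by (rule tendsto_0_le[OF ft])
      then show ?thesis using gx by (simp add: continuous_within)
    qed
  qed
  show ?thesis
  proof (intro exI[of _ g] conjI allI impI ballI)
    fix L assume "L \<subseteq> J \<and> card L \<le> p"
    then have LLL: "L \<in> LL" by (simp add: LL_def)
    have cm: "cmul (complex_of_real r) y = r *\<^sub>R y" for r y
      using assms(1) by (simp add: cstar_algebra_def)
    have "g L \<in> Bset I"
      unfolding Bset_def
    proof (intro CollectI conjI ballI allI)
      show "continuous_on std_simplex (g L)" by (rule gcont[OF LLL])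
    next
      fix x :: "real^'n" assume "x \<in> simplex_boundary" then show "g L x = 0" using fbd by (simp add: g_def)
    next
      fix j show "g L ` simplex_part j \<subseteq> I j"
      proof
        fix y assume "y \<in> g L ` simplex_part j"
        then obtain x :: "real^'n" where x: "x \<in> simplex_part j" "y = g L x" by auto
        have "f x \<in> I j" using fI x by auto
        then have "cmul (complex_of_real (\<psi> L x / S x)) (f x) \<in> I j"
          using assms(2) by (simp add: cstar_ideal_def)
        then show "y \<in> I j" using x by (simp only: cm g_def)
      qed
    qed
    moreover have "\<forall>j'. j' \<notin> L \<longrightarrow> (\<forall>x\<in>simplex_part j'. g L x = 0)"
    proof (intro allI impI ballI)
      fix j' and x :: "real^'n" assume "j' \<notin> L" "x \<in> simplex_part j'"
      then have "x \<in> C L" by (auto simp: C_def)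
      then have "\<psi> L x = 0" by (auto simp: \<psi>_def infdist_zero)
      then show "g L x = 0" by (simp add: g_def)
    qed
    ultimately show "g L \<in> BsetL I L" by (simp add: BsetL_def)
  next
    fix x :: "real^'n" assume x: "x \<in> std_simplex"
    have "(\<Sum>L\<in>LL. g L x) = (\<Sum>L\<in>LL. \<psi> L x / S x) *\<^sub>R f x"
      unfolding g_def by (rule scaleR_sum_left[symmetric])
    also have "(\<Sum>L\<in>LL. \<psi> L x / S x) = S x / S x"
      unfolding S_def by (rule sum_divide_distrib[symmetric])
    also have "(S x / S x) *\<^sub>R f x = f x" using f0[OF x] by (cases "S x = 0") auto
    finally show "f x = (\<Sum>L\<in>{L. L \<subseteq> J \<and> card L \<le> p}. g L x)" by (simp add: LL_def)
  qed
qed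

end
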